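(* Let $X(t)=\sum_{k=1}^{N(t)}X_k$ be a compound Poisson process with rate $\lambda>0$ and iid symmetric jumps $X_k$, and $S_k=X_1+\dots+X_k$. Then for all $u>0$, $$P\Big(\sup_{0\le t\le1}X(t)>u\Big)\le2P(X(1)>u)-D(u),$$ where $$D(u)=e^{-\lambda}\Big[\lambda P(X_1>u)+\sum_{n=2}^\infty\frac{\lambda^n}{n!}P\Big(\max_{1\le k\le n-1}S_k\le u,\ S_n>u\Big)\Big].$$ *)

theory Defs
  imports "HOL-Probability.Probability"
begin

definition partial_sum :: "(nat \<Rightarrow> 'a \<Rightarrow> real) \<Rightarrow> nat \<Rightarrow> 'a \<Rightarrow> real" where
  "partial_sum X k \<omega> = (\<Sum>i=1..k. X i \<omega>)"

definition arrival :: "(nat \<Rightarrow> 'a \<Rightarrow> real) \<Rightarrow> nat \<Rightarrow> 'a \<Rightarrow> real" where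
  "arrival T n \<omega> = (\<Sum>i=1..n. T i \<omega>)"

text \<open>Counting process N(t) = number of arrivals in [0,t]; with iid Exp(lambda)
  inter-arrival times this is a Poisson process of rate lambda.\<close>
definition counting :: "(nat \<Rightarrow> 'a \<Rightarrow> real) \<Rightarrow> real \<Rightarrow> 'a \<Rightarrow> nat" where
  "counting T t \<omega> = card {n. 1 \<le> n \<and> arrival T n \<omega> \<le> t}"

definition compound :: "(nat \<Rightarrow> 'a \<Rightarrow> real) \<Rightarrow> (nat \<Rightarrow> 'a \<Rightarrow> real) \<Rightarrow> real \<Rightarrow> 'a \<Rightarrow> real" where
  "compound T X t \<omega> = partial_sum X (counting T t \<omega>) \<omega>"

end

theory Submission
  imports Defs
begin

lemma comp_meas[measurable]: "(\<lambda>f. f i) \<in> measurable (PiM A (\<lambda>_. borel)) (borel::real measure)"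
proof (cases "i \<in> A")
  case True then show ?thesis by (rule measurable_component_singleton)
next
  case False
  have 2: "\<And>w. w \<in> space (PiM A (\<lambda>_. borel::real measure)) \<Longrightarrow> w i = undefined"
    using False unfolding space_PiM by (rule_tac PiE_arb) auto
  show ?thesis unfolding measurable_def
  proof (intro CollectI conjI ballI)
    fix y :: "real set" assume "y \<in> sets borel"
    have "(\<lambda>f. f i) -` y \<inter> space (PiM A (\<lambda>_. borel::real measure)) = (if undefined \<in> y then space (PiM A (\<lambda>_. borel::real measure)) else {})"
      using 2 by (auto; metis)
    then show "(\<lambda>f. f i) -` y \<inter> space (PiM A (\<lambda>_. borel::real measure)) \<in> sets (PiM A (\<lambda>_. borel::real measure))" by simp
  qed auto
qed

locale cpp = prob_space M for M :: "'a measure" +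
  fixes T X :: "nat \<Rightarrow> 'a \<Rightarrow> real" and l u :: real
  assumes l_pos: "0 < l"
    and indep: "indep_vars (\<lambda>_. borel)
                  (\<lambda>i. case i of Inl n \<Rightarrow> T n | Inr n \<Rightarrow> X n) (Inl ` {1..} \<union> Inr ` {1..})"
    and exp_T: "\<And>n. 1 \<le> n \<Longrightarrow> distributed M lborel (T n) (\<lambda>x. ennreal (exponential_density l x))"
    and X_rv: "\<And>n. 1 \<le> n \<Longrightarrow> X n \<in> borel_measurable M"
    and X_ident: "\<And>n. 1 \<le> n \<Longrightarrow> distr M borel (X n) = distr M borel (X 1)"
    and X_symm: "distr M borel (\<lambda>\<omega>. - X 1 \<omega>) = distr M borel (X 1)"
    and u_pos: "0 < u"
begin

abbreviation Z :: "nat + nat \<Rightarrow> 'a \<Rightarrow> real" where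
  "Z \<equiv> (\<lambda>i. case i of Inl n \<Rightarrow> T n | Inr n \<Rightarrow> X n)"

abbreviation II :: "(nat + nat) set" where
  "II \<equiv> Inl ` {1..} \<union> Inr ` {1..}"

abbreviation V :: "(nat + nat) set \<Rightarrow> 'a \<Rightarrow> (nat + nat \<Rightarrow> real)" where
  "V A \<omega> \<equiv> restrict (\<lambda>i. Z i \<omega>) A"

lemma Z_rv: "i \<in> II \<Longrightarrow> Z i \<in> borel_measurable M"
  using indep unfolding indep_vars_def by auto

lemma T_rv: "1 \<le> n \<Longrightarrow> T n \<in> borel_measurable M"
  using Z_rv[of "Inl n"] by auto

lemma V_meas: "A \<subseteq> II \<Longrightarrow> V A \<in> measurable M (PiM A (\<lambda>_. borel))"
  by (rule measurable_restrict) (use Z_rv in auto)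

lemma block:
  assumes AB: "A \<inter> B = {}" "A \<subseteq> II" "B \<subseteq> II"
    and Ea: "{f\<in>space (PiM A (\<lambda>_. borel)). P f} \<in> sets (PiM A (\<lambda>_. borel))"
    and Eb: "{f\<in>space (PiM B (\<lambda>_. borel)). Q f} \<in> sets (PiM B (\<lambda>_. borel))"
  shows "prob {\<omega>\<in>space M. P (V A \<omega>) \<and> Q (V B \<omega>)} =
         prob {\<omega>\<in>space M. P (V A \<omega>)} * prob {\<omega>\<in>space M. Q (V B \<omega>)}"
proof -
  have ind: "indep_var (PiM A (\<lambda>_. borel)) (V A) (PiM B (\<lambda>_. borel)) (V B)"
    by (rule indep_var_restrict[OF indep AB])
  have sA: "\<And>\<omega>. \<omega> \<in> space M \<Longrightarrow> V A \<omega> \<in> space (PiM A (\<lambda>_. borel))"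
    using measurable_space[OF V_meas[OF AB(2)]] .
  have sB: "\<And>\<omega>. \<omega> \<in> space M \<Longrightarrow> V B \<omega> \<in> space (PiM B (\<lambda>_. borel))"
    using measurable_space[OF V_meas[OF AB(3)]] .
  have "prob ((\<lambda>x. (V A x, V B x)) -` ({f\<in>space (PiM A (\<lambda>_. borel)). P f} \<times> {f\<in>space (PiM B (\<lambda>_. borel)). Q f}) \<inter> space M)
     = prob ((V A) -` {f\<in>space (PiM A (\<lambda>_. borel)). P f} \<inter> space M) * prob ((V B) -` {f\<in>space (PiM B (\<lambda>_. borel)). Q f} \<inter> space M)"
    by (rule indep_varD[OF ind Ea Eb])
  moreover have "(\<lambda>x. (V A x, V B x)) -` ({f\<in>space (PiM A (\<lambda>_. borel)). P f} \<times> {f\<in>space (PiM B (\<lambda>_. borel)). Q f}) \<inter> space M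
      = {\<omega>\<in>space M. P (V A \<omega>) \<and> Q (V B \<omega>)}" using sA sB by blast
  moreover have "(V A) -` {f\<in>space (PiM A (\<lambda>_. borel)). P f} \<inter> space M = {\<omega>\<in>space M. P (V A \<omega>)}"
    using sA by blast
  moreover have "(V B) -` {f\<in>space (PiM B (\<lambda>_. borel)). Q f} \<inter> space M = {\<omega>\<in>space M. Q (V B \<omega>)}"
    using sB by blast
  ultimately show ?thesis by simp
qed

lemma psum_meas[measurable]: "partial_sum X k \<in> borel_measurable M"
proof -
  have "partial_sum X k = (\<lambda>\<omega>. \<Sum>i=1..k. X i \<omega>)" by (simp add: fun_eq_iff partial_sum_def)
  moreover have "(\<lambda>\<omega>. \<Sum>i=1..k. X i \<omega>) \<in> borel_measurable M"
    by (rule borel_measurable_sum) (use X_rv in auto)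
  ultimately show ?thesis by simp
qed

lemma arr_meas[measurable]: "arrival T k \<in> borel_measurable M"
proof -
  have "arrival T k = (\<lambda>\<omega>. \<Sum>i=1..k. T i \<omega>)" by (simp add: fun_eq_iff arrival_def)
  moreover have "(\<lambda>\<omega>. \<Sum>i=1..k. T i \<omega>) \<in> borel_measurable M"
    by (rule borel_measurable_sum) (use T_rv in auto)
  ultimately show ?thesis by simp
qed

lemma counting_eq:
  "(counting T 1 \<omega> = n) \<longleftrightarrow>
    (\<exists>b. (\<forall>m. b < m \<longrightarrow> \<not> arrival T m \<omega> \<le> 1) \<and>
         (\<Sum>m\<in>{1..b}. if arrival T m \<omega> \<le> 1 then 1 else 0 :: real) = real n) \<or>
    ((\<forall>b. \<exists>m. b < m \<and> arrival T m \<omega> \<le> 1) \<and> n = 0)"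
proof -
  define K where "K = {m. 1 \<le> m \<and> arrival T m \<omega> \<le> 1}"
  have cK: "counting T 1 \<omega> = card K" by (simp add: counting_def K_def)
  have sumK: "(\<Sum>m\<in>{1..b}. if arrival T m \<omega> \<le> 1 then 1 else 0 :: real) = real (card K)"
    if "\<forall>m. b < m \<longrightarrow> \<not> arrival T m \<omega> \<le> 1" for b
  proof -
    have "K = {m\<in>{1..b}. arrival T m \<omega> \<le> 1}" using that by (auto simp: K_def) (meson not_less)
    then have "real (card K) = (\<Sum>m\<in>{m\<in>{1..b}. arrival T m \<omega> \<le> 1}. 1)" by simp
    also have "\<dots> = (\<Sum>m\<in>{1..b}. if arrival T m \<omega> \<le> 1 then 1 else 0)"
      by (rule sum.inter_filter) simp
    finally show ?thesis by simp
  qed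
  show ?thesis
  proof (cases "finite K")
    case True
    then obtain b where b: "\<forall>m\<in>K. m < b" using finite_nat_bounded by blast
    have nb: "\<forall>m. b < m \<longrightarrow> \<not> arrival T m \<omega> \<le> 1"
    proof (intro allI impI notI)
      fix m assume m: "b < m" "arrival T m \<omega> \<le> 1"
      then have "m \<in> K" by (simp add: K_def)
      then show False using b m(1) by auto
    qed
    have "\<not> (\<forall>b. \<exists>m. b < m \<and> arrival T m \<omega> \<le> 1)" using nb by (meson less_trans lessI)
    then show ?thesis using sumK nb by (auto simp: cK)
  next
    case False
    then have unb: "\<forall>b. \<exists>m. b < m \<and> arrival T m \<omega> \<le> 1"
      unfolding infinite_nat_iff_unbounded K_def by auto
    then show ?thesis using False by (auto simp: cK)
  qed
qed

lemma N_pred[measurable]: "Measurable.pred M (\<lambda>\<omega>. counting T 1 \<omega> = n)"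
  unfolding counting_eq by measurable

lemma sym_sum:
  assumes "finite J" "J \<subseteq> {1..}"
  shows "distr M borel (\<lambda>\<omega>. - (\<Sum>i\<in>J. X i \<omega>)) = distr M borel (\<lambda>\<omega>. \<Sum>i\<in>J. X i \<omega>)"
  using assms
proof (induction J rule: finite_induct)
  case empty
  then show ?case by simp
next
  case (insert j J)
  define W where "W = X j"
  define Y where "Y = (\<lambda>\<omega>. \<Sum>i\<in>J. X i \<omega>)"
  have j1: "1 \<le> j" using insert by auto
  have Wm[measurable]: "W \<in> borel_measurable M" using X_rv[OF j1] by (simp add: W_def)
  have Ym[measurable]: "Y \<in> borel_measurable M" unfolding Y_def
    by (rule borel_measurable_sum) (use X_rv insert in auto)
  have ind0: "indep_var borel (Z (Inr j)) borel (\<lambda>\<omega>. \<Sum>i\<in>Inr ` J. Z i \<omega>)"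
  proof (rule indep_vars_sum)
    show "indep_vars (\<lambda>_. borel) Z (insert (Inr j) (Inr ` J))"
      by (rule indep_vars_subset[OF indep]) (use insert in auto)
  qed (use insert in auto)
  have ind: "indep_var borel W borel Y"
    using ind0 by (simp add: W_def Y_def sum.reindex)
  have ind2: "indep_var borel (uminus \<circ> W) borel (uminus \<circ> Y)"
    by (rule indep_var_compose[OF ind]) auto
  have dW: "distr M borel (\<lambda>\<omega>. - W \<omega>) = distr M borel W"
  proof -
    have "distr M borel (\<lambda>\<omega>. - W \<omega>) = distr (distr M borel (X j)) borel uminus"
      using X_rv[OF j1] by (simp add: distr_distr W_def comp_def)
    also have "\<dots> = distr (distr M borel (X 1)) borel uminus" using X_ident[OF j1] by simp
    also have "\<dots> = distr M borel (\<lambda>\<omega>. - X 1 \<omega>)"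
      using X_rv[of 1] by (simp add: distr_distr comp_def)
    also have "\<dots> = distr M borel W" using X_symm X_ident[OF j1] by (simp add: W_def)
    finally show ?thesis .
  qed
  have dY: "distr M borel (\<lambda>\<omega>. - Y \<omega>) = distr M borel Y"
    using insert by (simp add: Y_def)
  have "distr M borel (\<lambda>\<omega>. W \<omega> + Y \<omega>) = distr (distr M (borel \<Otimes>\<^sub>M borel) (\<lambda>\<omega>. (W \<omega>, Y \<omega>))) borel (\<lambda>(a,b). a + b)"
    by (simp add: distr_distr comp_def)
  also have "\<dots> = distr (distr M borel W \<Otimes>\<^sub>M distr M borel Y) borel (\<lambda>(a,b). a + b)"
    using ind unfolding indep_var_distribution_eq by simp
  finally have e1: "distr M borel (\<lambda>\<omega>. W \<omega> + Y \<omega>) = distr (distr M borel W \<Otimes>\<^sub>M distr M borel Y) borel (\<lambda>(a,b). a + b)" .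
  have "distr M borel (\<lambda>\<omega>. (- W \<omega>) + (- Y \<omega>)) = distr (distr M (borel \<Otimes>\<^sub>M borel) (\<lambda>\<omega>. ((uminus \<circ> W) \<omega>, (uminus \<circ> Y) \<omega>))) borel (\<lambda>(a,b). a + b)"
    by (simp add: distr_distr comp_def)
  also have "\<dots> = distr (distr M borel (uminus \<circ> W) \<Otimes>\<^sub>M distr M borel (uminus \<circ> Y)) borel (\<lambda>(a,b). a + b)"
    using ind2 unfolding indep_var_distribution_eq by simp
  also have "\<dots> = distr (distr M borel W \<Otimes>\<^sub>M distr M borel Y) borel (\<lambda>(a,b). a + b)"
    using dW dY by (simp add: comp_def)
  finally have e2: "distr M borel (\<lambda>\<omega>. (- W \<omega>) + (- Y \<omega>)) = distr (distr M borel W \<Otimes>\<^sub>M distr M borel Y) borel (\<lambda>(a,b). a + b)" .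
  have s1: "(\<lambda>\<omega>. \<Sum>i\<in>insert j J. X i \<omega>) = (\<lambda>\<omega>. W \<omega> + Y \<omega>)"
    using insert by (simp add: W_def Y_def)
  have s2: "(\<lambda>\<omega>. - (\<Sum>i\<in>insert j J. X i \<omega>)) = (\<lambda>\<omega>. (- W \<omega>) + (- Y \<omega>))"
    using insert by (simp add: W_def Y_def)
  show ?case unfolding s1 s2 e1 e2 ..
qed

lemma sym_prob:
  assumes "finite J" "J \<subseteq> {1..}"
  shows "prob {\<omega>\<in>space M. (\<Sum>i\<in>J. X i \<omega>) < 0} = prob {\<omega>\<in>space M. (\<Sum>i\<in>J. X i \<omega>) > 0}"
proof -
  have Ym[measurable]: "(\<lambda>\<omega>. \<Sum>i\<in>J. X i \<omega>) \<in> borel_measurable M"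
    by (rule borel_measurable_sum) (use X_rv assms in auto)
  have "prob {\<omega>\<in>space M. (\<Sum>i\<in>J. X i \<omega>) > 0} = measure (distr M borel (\<lambda>\<omega>. \<Sum>i\<in>J. X i \<omega>)) {0<..}"
    by (subst measure_distr) (auto intro!: arg_cong[where f=prob])
  also have "\<dots> = measure (distr M borel (\<lambda>\<omega>. - (\<Sum>i\<in>J. X i \<omega>))) {0<..}"
    using sym_sum[OF assms] by simp
  also have "\<dots> = prob {\<omega>\<in>space M. (\<Sum>i\<in>J. X i \<omega>) < 0}"
    by (subst measure_distr) (auto intro!: arg_cong[where f=prob])
  finally show ?thesis by simp
qed

definition Fs :: "nat \<Rightarrow> 'a set" where
  "Fs k = {\<omega>\<in>space M. (\<forall>j\<in>{1..k-1}. partial_sum X j \<omega> \<le> u) \<and> partial_sum X k \<omega> > u}"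
definition Es :: "nat \<Rightarrow> 'a set" where
  "Es n = {\<omega>\<in>space M. \<exists>k\<in>{1..n}. partial_sum X k \<omega> > u}"
definition Ss :: "nat \<Rightarrow> 'a set" where
  "Ss n = {\<omega>\<in>space M. partial_sum X n \<omega> > u}"

lemma Fs_sets[measurable]: "Fs k \<in> sets M" unfolding Fs_def by measurable
lemma Es_sets[measurable]: "Es k \<in> sets M" unfolding Es_def by measurable
lemma Ss_sets[measurable]: "Ss k \<in> sets M" unfolding Ss_def by measurable

lemma sumV: "{a..b} \<subseteq> J \<Longrightarrow> (\<Sum>i=a..b. V (Inr ` J) \<omega> (Inr i)) = (\<Sum>i=a..b. X i \<omega>)"
  by (rule sum.cong) auto

lemma psum_split: "k \<le> n \<Longrightarrow> partial_sum X n \<omega> = partial_sum X k \<omega> + (\<Sum>i=k+1..n. X i \<omega>)"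
proof -
  assume "k \<le> n"
  then obtain p where p: "n = k + p" using le_Suc_ex by blast
  show ?thesis unfolding partial_sum_def p by (rule sum.ub_add_nat) simp
qed

lemma block_FR:
  assumes k: "1 \<le> k" "k < n" and Bs[measurable]: "Bs \<in> sets borel"
  shows "prob {\<omega>\<in>space M. \<omega> \<in> Fs k \<and> (\<Sum>i=k+1..n. X i \<omega>) \<in> Bs}
       = prob (Fs k) * prob {\<omega>\<in>space M. (\<Sum>i=k+1..n. X i \<omega>) \<in> Bs}"
proof -
  let ?A = "Inr ` {1..k} :: (nat+nat) set"
  let ?B = "Inr ` {k+1..n} :: (nat+nat) set"
  let ?P = "\<lambda>f. (\<forall>j\<in>{1..k-1}. (\<Sum>i=1..j. f (Inr i)) \<le> u) \<and> (\<Sum>i=1..k. f (Inr i)) > u"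
  let ?Q = "\<lambda>f. (\<Sum>i=k+1..n. f (Inr i)) \<in> Bs"
  have PA: "?P (V ?A \<omega>) \<longleftrightarrow> (\<forall>j\<in>{1..k-1}. partial_sum X j \<omega> \<le> u) \<and> partial_sum X k \<omega> > u" for \<omega>
  proof -
    have eq: "(\<Sum>i=1..j. V ?A \<omega> (Inr i)) = partial_sum X j \<omega>" if "j \<le> k" for j
      using sumV[of 1 j "{1..k}" \<omega>] that by (simp add: partial_sum_def)
    have "(\<forall>j\<in>{1..k-1}. (\<Sum>i=1..j. V ?A \<omega> (Inr i)) \<le> u) \<longleftrightarrow> (\<forall>j\<in>{1..k-1}. partial_sum X j \<omega> \<le> u)"
      by (rule ball_cong[OF refl], subst eq, auto)
    moreover have "(\<Sum>i=1..k. V ?A \<omega> (Inr i)) = partial_sum X k \<omega>" by (rule eq) simp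
    ultimately show ?thesis by (simp only:)
  qed
  have QB: "?Q (V ?B \<omega>) \<longleftrightarrow> (\<Sum>i=k+1..n. X i \<omega>) \<in> Bs" for \<omega>
    using sumV[of "k+1" n "{k+1..n}" \<omega>] by simp
  have "prob {\<omega>\<in>space M. ?P (V ?A \<omega>) \<and> ?Q (V ?B \<omega>)} = prob {\<omega>\<in>space M. ?P (V ?A \<omega>)} * prob {\<omega>\<in>space M. ?Q (V ?B \<omega>)}"
    by (rule block) (use k in \<open>auto, measurable\<close>)
  then show ?thesis unfolding PA QB Fs_def by (simp add: conj_assoc)
qed

lemma Es_union: "Es n = (\<Union>k\<in>{1..n}. Fs k)"
proof
  show "Es n \<subseteq> (\<Union>k\<in>{1..n}. Fs k)"
  proof
    fix \<omega> assume "\<omega> \<in> Es n"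
    then obtain k where k: "k \<in> {1..n}" "partial_sum X k \<omega> > u" and om: "\<omega> \<in> space M"
      by (auto simp: Es_def)
    define k0 where "k0 = (LEAST k. 1 \<le> k \<and> partial_sum X k \<omega> > u)"
    have k0: "1 \<le> k0 \<and> partial_sum X k0 \<omega> > u" unfolding k0_def
      by (rule LeastI[of _ k]) (use k in auto)
    have k0le: "k0 \<le> k" unfolding k0_def by (rule Least_le) (use k in auto)
    have "\<forall>j\<in>{1..k0-1}. partial_sum X j \<omega> \<le> u"
    proof
      fix j assume j: "j \<in> {1..k0-1}"
      show "partial_sum X j \<omega> \<le> u"
      proof (rule ccontr)
        assume "\<not> partial_sum X j \<omega> \<le> u"
        then have "k0 \<le> j" unfolding k0_def by (intro Least_le) (use j in auto)
        then show False using j by auto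
      qed
    qed
    then have "\<omega> \<in> Fs k0" using k0 om by (simp add: Fs_def)
    then show "\<omega> \<in> (\<Union>k\<in>{1..n}. Fs k)" using k0 k0le k by auto
  qed
next
  show "(\<Union>k\<in>{1..n}. Fs k) \<subseteq> Es n" by (auto simp: Fs_def Es_def)
qed

lemma Fs_disj: "disjoint_family Fs"
  unfolding disjoint_family_on_def
proof (intro ballI impI)
  fix a b :: nat assume "a \<noteq> b"
  have *: "Fs a \<inter> Fs b = {}" if ab: "a < b" for a b :: nat
  proof (rule ccontr)
    assume "Fs a \<inter> Fs b \<noteq> {}"
    then obtain \<omega> where a: "\<omega> \<in> Fs a" and b: "\<omega> \<in> Fs b" by auto
    show False
    proof (cases "a = 0")
      case True then show False using a u_pos by (simp add: Fs_def partial_sum_def)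
    next
      case False then have "a \<in> {1..b-1}" using ab by auto
      moreover have "partial_sum X a \<omega> > u" using a by (simp add: Fs_def)
      moreover have "\<forall>j\<in>{1..b-1}. partial_sum X j \<omega> \<le> u" using b by (simp add: Fs_def)
      ultimately show False by force
    qed
  qed
  show "Fs a \<inter> Fs b = {}"
  proof (cases "a < b")
    case True then show ?thesis using * by blast
  next
    case False then have "b < a" using \<open>a \<noteq> b\<close> by simp
    then show ?thesis using *[of b a] by blast
  qed
qed

lemma rw_ineq:
  assumes n: "1 \<le> n"
  shows "prob (Es n) \<le> 2 * prob (Ss n) - prob (Fs n)"
proof -
  have key: "prob (Fs k) \<le> 2 * prob (Fs k \<inter> Ss n)" if k: "1 \<le> k" "k < n" for k
  proof -
    let ?R = "\<lambda>\<omega>. \<Sum>i=k+1..n. X i \<omega>"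
    have Rm[measurable]: "?R \<in> borel_measurable M"
      by (rule borel_measurable_sum) (use X_rv k in auto)
    have J: "finite {k+1..n}" "{k+1..n} \<subseteq> {1..}" using k by auto
    have e1: "prob (Fs k) = prob (Fs k \<inter> Ss n) + prob (Fs k - Ss n)"
      by (subst finite_measure_Union[symmetric]) (auto intro!: arg_cong[where f=prob])
    have "prob (Fs k - Ss n) \<le> prob {\<omega>\<in>space M. \<omega> \<in> Fs k \<and> ?R \<omega> \<in> {..<0}}"
    proof (rule finite_measure_mono)
      show "Fs k - Ss n \<subseteq> {\<omega>\<in>space M. \<omega> \<in> Fs k \<and> ?R \<omega> \<in> {..<0}}"
        using psum_split[of k n] k by (auto simp: Fs_def Ss_def)
    qed measurable
    also have "\<dots> = prob (Fs k) * prob {\<omega>\<in>space M. ?R \<omega> \<in> {..<0}}"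
      by (rule block_FR) (use k in auto)
    also have "prob {\<omega>\<in>space M. ?R \<omega> \<in> {..<0}} = prob {\<omega>\<in>space M. ?R \<omega> \<in> {0<..}}"
      using sym_prob[OF J] by simp
    also have "prob (Fs k) * \<dots> = prob {\<omega>\<in>space M. \<omega> \<in> Fs k \<and> ?R \<omega> \<in> {0<..}}"
      by (rule block_FR[symmetric]) (use k in auto)
    also have "\<dots> \<le> prob (Fs k \<inter> Ss n)"
    proof (rule finite_measure_mono)
      show "{\<omega>\<in>space M. \<omega> \<in> Fs k \<and> ?R \<omega> \<in> {0<..}} \<subseteq> Fs k \<inter> Ss n"
        using psum_split[of k n] k by (auto simp: Fs_def Ss_def)
    qed measurable
    finally show ?thesis using e1 by simp
  qed
  have FnS: "Fs n \<inter> Ss n = Fs n" by (auto simp: Fs_def Ss_def)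
  have "prob (Es n) = (\<Sum>k\<in>{1..n}. prob (Fs k))"
    unfolding Es_union
    by (rule finite_measure_finite_Union) (use Fs_disj in \<open>auto simp: disjoint_family_on_def\<close>)
  also have "\<dots> = (\<Sum>k\<in>{1..n-1}. prob (Fs k)) + prob (Fs n)"
  proof -
    have "{1..n} = insert n {1..n-1}" using n by auto
    then show ?thesis using n by simp
  qed
  also have "\<dots> \<le> (\<Sum>k\<in>{1..n-1}. 2 * prob (Fs k \<inter> Ss n)) + prob (Fs n)"
    by (intro add_mono sum_mono key) auto
  also have "\<dots> = 2 * (\<Sum>k\<in>{1..n}. prob (Fs k \<inter> Ss n)) - prob (Fs n)"
  proof -
    have "{1..n} = insert n {1..n-1}" using n by auto
    then show ?thesis using n by (simp add: FnS sum_distrib_left)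
  qed
  also have "(\<Sum>k\<in>{1..n}. prob (Fs k \<inter> Ss n)) = prob (\<Union>k\<in>{1..n}. Fs k \<inter> Ss n)"
    by (rule finite_measure_finite_Union[symmetric]) (use Fs_disj in \<open>auto simp: disjoint_family_on_def\<close>)
  also have "\<dots> \<le> prob (Ss n)" by (rule finite_measure_mono) auto
  finally show ?thesis by simp
qed

lemma arr_erlang: "distributed M lborel (arrival T (Suc k)) (erlang_density k l)"
proof -
  have "distributed M lborel (\<lambda>x. \<Sum>i\<in>Inl ` {1..Suc k}. Z i x) (erlang_density ((card (Inl ` {1..Suc k} :: (nat+nat) set)) - 1) l)"
  proof (rule exponential_distributed_sum)
    show "indep_vars (\<lambda>i. borel) Z (Inl ` {1..Suc k})"
      by (rule indep_vars_subset[OF indep]) auto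
    show "distributed M lborel (Z i) (exponential_density l)" if "i \<in> Inl ` {1..Suc k}" for i
      using that exp_T by auto
  qed (use l_pos in auto)
  moreover have "(\<lambda>x. \<Sum>i\<in>Inl ` {1..Suc k}. Z i x) = arrival T (Suc k)"
    by (simp add: fun_eq_iff arrival_def sum.reindex)
  moreover have "card (Inl ` {1..Suc k} :: (nat+nat) set) = Suc k"
    by (simp add: card_image)
  ultimately show ?thesis by simp
qed

lemma prob_arr_le: "prob {\<omega>\<in>space M. arrival T (Suc k) \<omega> \<le> 1} = erlang_CDF k l 1"
  using erlang_distributed_le[OF arr_erlang l_pos] by simp

definition good :: "'a \<Rightarrow> bool" where
  "good \<omega> \<longleftrightarrow> (\<forall>i. 1 \<le> i \<longrightarrow> 0 < T i \<omega>) \<and> (\<exists>m. 1 \<le> m \<and> 1 < arrival T m \<omega>)"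

lemma AE_T_pos: "AE \<omega> in M. \<forall>i. 1 \<le> i \<longrightarrow> 0 < T i \<omega>"
proof (subst AE_all_countable, intro allI)
  fix i :: nat
  show "AE \<omega> in M. 1 \<le> i \<longrightarrow> 0 < T i \<omega>"
  proof (cases "1 \<le> i")
    case True
    have "prob {\<omega>\<in>space M. 0 < T i \<omega>} = 1"
      using exponential_distributedD_gt[OF exp_T[OF True] _ l_pos, of 0] by simp
    then have "AE \<omega> in M. \<omega> \<in> {\<omega>\<in>space M. 0 < T i \<omega>}" by (rule AE_prob_1)
    then show ?thesis by auto
  qed simp
qed

lemma erlang_lim: "(\<lambda>k. erlang_CDF k l 1) \<longlonglongrightarrow> 0"
proof -
  have "(\<lambda>n. l^n /\<^sub>R fact n) sums exp l" by (rule exp_converges)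
  then have "(\<lambda>k. \<Sum>n<k. l^n / fact n) \<longlonglongrightarrow> exp l"
    by (simp add: sums_def divide_inverse mult.commute)
  then have "(\<lambda>k. \<Sum>n<Suc k. l^n / fact n) \<longlonglongrightarrow> exp l"
    by (rule LIMSEQ_Suc)
  then have "(\<lambda>k. 1 - (\<Sum>n<Suc k. l^n / fact n) * exp (- l)) \<longlonglongrightarrow> 1 - exp l * exp (- l)"
    by (intro tendsto_intros)
  moreover have "erlang_CDF k l 1 = 1 - (\<Sum>n<Suc k. l^n / fact n) * exp (- l)" for k
    by (simp add: erlang_CDF_def lessThan_Suc_atMost sum_distrib_right)
  moreover have "1 - exp l * exp (- l) = (0::real)" by (simp add: exp_minus)
  ultimately show ?thesis by simp
qed

lemma AE_arr_big: "AE \<omega> in M. \<exists>m. 1 \<le> m \<and> 1 < arrival T m \<omega>"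
proof -
  define C where "C = {\<omega>\<in>space M. \<forall>m. 1 \<le> m \<longrightarrow> arrival T m \<omega> \<le> 1}"
  have Cm[measurable]: "C \<in> sets M" unfolding C_def by measurable
  have "prob C \<le> erlang_CDF k l 1" for k
  proof -
    have "prob C \<le> prob {\<omega>\<in>space M. arrival T (Suc k) \<omega> \<le> 1}"
      by (rule finite_measure_mono) (auto simp: C_def)
    then show ?thesis by (simp add: prob_arr_le)
  qed
  then have "prob C \<le> 0" using LIMSEQ_le_const[OF erlang_lim, of "prob C"] by blast
  then have "prob C = 0" using measure_nonneg[of M C] by linarith
  then have "C \<in> null_sets M" using Cm by (simp add: null_sets_def emeasure_eq_measure)
  from AE_not_in[OF this] AE_space show ?thesis
    by eventually_elim (auto simp: C_def not_le)
qed

lemma AE_good: "AE \<omega> in M. good \<omega>"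
  using AE_T_pos AE_arr_big by eventually_elim (simp add: good_def)

lemma arr_mono:
  assumes g: "good \<omega>" and ij: "i \<le> j"
  shows "arrival T i \<omega> \<le> arrival T j \<omega>"
proof -
  obtain p where p: "j = i + p" using ij le_Suc_ex by blast
  have "arrival T j \<omega> = arrival T i \<omega> + (\<Sum>k=i+1..j. T k \<omega>)"
    unfolding arrival_def p by (rule sum.ub_add_nat) simp
  moreover have "0 \<le> (\<Sum>k=i+1..j. T k \<omega>)"
    by (rule sum_nonneg) (use g in \<open>auto simp: good_def less_imp_le\<close>)
  ultimately show ?thesis by simp
qed

lemma K_eq:
  assumes g: "good \<omega>"
  shows "{m. 1 \<le> m \<and> arrival T m \<omega> \<le> 1} = {1..counting T 1 \<omega>}"
proof -
  define K where "K = {m. 1 \<le> m \<and> arrival T m \<omega> \<le> 1}"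
  obtain m0 where m0: "1 \<le> m0" "1 < arrival T m0 \<omega>" using g by (auto simp: good_def)
  have Ksub: "K \<subseteq> {1..<m0}"
  proof
    fix m assume "m \<in> K"
    then have m: "1 \<le> m" "arrival T m \<omega> \<le> 1" by (auto simp: K_def)
    have "m < m0"
    proof (rule ccontr)
      assume "\<not> m < m0"
      then have "arrival T m0 \<omega> \<le> arrival T m \<omega>" by (intro arr_mono[OF g]) simp
      then show False using m m0 by simp
    qed
    then show "m \<in> {1..<m0}" using m by simp
  qed
  then have finK: "finite K" using finite_subset by blast
  have down: "j \<in> K" if "m \<in> K" "1 \<le> j" "j \<le> m" for m j
    using that arr_mono[OF g, of j m] by (auto simp: K_def)
  have "K = {1..card K}"
  proof (cases "K = {}")
    case True then show ?thesis by simp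
  next
    case False
    have "K = {1..Max K}"
    proof
      show "K \<subseteq> {1..Max K}" using finK by (auto simp: K_def)
      show "{1..Max K} \<subseteq> K" using down[of "Max K"] Max_in[OF finK False] by auto
    qed
    then show ?thesis by (metis card_atLeastAtMost diff_Suc_1)
  qed
  then show ?thesis by (simp add: K_def counting_def)
qed

lemma le_N_iff: "good \<omega> \<Longrightarrow> 1 \<le> k \<Longrightarrow> k \<le> counting T 1 \<omega> \<longleftrightarrow> arrival T k \<omega> \<le> 1"
  using K_eq[of \<omega>] by (auto simp: set_eq_iff)

lemma sumVl: "{a..b} \<subseteq> J \<Longrightarrow> (\<Sum>i=a..b. V (Inl ` J) \<omega> (Inl i)) = (\<Sum>i=a..b. T i \<omega>)"
  by (rule sum.cong) auto

lemma Vset_sets: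
  assumes "B \<subseteq> II" and Qm: "{f\<in>space (PiM B (\<lambda>_. borel)). Q f} \<in> sets (PiM B (\<lambda>_. borel))"
  shows "{\<omega>\<in>space M. Q (V B \<omega>)} \<in> sets M"
proof -
  have "{\<omega>\<in>space M. Q (V B \<omega>)} = V B -` {f\<in>space (PiM B (\<lambda>_. borel)). Q f} \<inter> space M"
    using measurable_space[OF V_meas[OF assms(1)]] by blast
  also have "\<dots> \<in> sets M" by (rule measurable_sets[OF V_meas[OF assms(1)] Qm])
  finally show ?thesis .
qed

lemma prob_G:
  assumes n: "1 \<le> n"
  shows "prob {\<omega>\<in>space M. arrival T n \<omega> \<le> 1 \<and> \<not> arrival T (n+1) \<omega> \<le> 1} = exp (- l) * l^n / fact n"
proof -
  obtain m where m: "n = Suc m" using n by (cases n) auto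
  have "{\<omega>\<in>space M. arrival T n \<omega> \<le> 1 \<and> \<not> arrival T (n+1) \<omega> \<le> 1}
      = {\<omega>\<in>space M. arrival T n \<omega> \<le> 1} - {\<omega>\<in>space M. arrival T n \<omega> \<le> 1 \<and> arrival T (n+1) \<omega> \<le> 1}"
    by auto
  then have "prob {\<omega>\<in>space M. arrival T n \<omega> \<le> 1 \<and> \<not> arrival T (n+1) \<omega> \<le> 1}
      = prob {\<omega>\<in>space M. arrival T n \<omega> \<le> 1} - prob {\<omega>\<in>space M. arrival T n \<omega> \<le> 1 \<and> arrival T (n+1) \<omega> \<le> 1}"
    by (simp add: finite_measure_Diff[symmetric] Collect_mono_iff)
  also have "prob {\<omega>\<in>space M. arrival T n \<omega> \<le> 1 \<and> arrival T (n+1) \<omega> \<le> 1} = prob {\<omega>\<in>space M. arrival T (n+1) \<omega> \<le> 1}"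
  proof (rule finite_measure_eq_AE)
    show "AE \<omega> in M. (\<omega> \<in> {\<omega>\<in>space M. arrival T n \<omega> \<le> 1 \<and> arrival T (n+1) \<omega> \<le> 1}) = (\<omega> \<in> {\<omega>\<in>space M. arrival T (n+1) \<omega> \<le> 1})"
      using AE_good
    proof eventually_elim
      case (elim \<omega>)
      then show ?case using arr_mono[OF elim, of n "n+1"] by auto
    qed
  qed measurable
  also have "prob {\<omega>\<in>space M. arrival T n \<omega> \<le> 1} = erlang_CDF m l 1"
    using prob_arr_le[of m] m by simp
  also have "prob {\<omega>\<in>space M. arrival T (n+1) \<omega> \<le> 1} = erlang_CDF (Suc m) l 1"
    using prob_arr_le[of "Suc m"] m by simp
  also have "erlang_CDF m l 1 - erlang_CDF (Suc m) l 1 = exp (- l) * l^n / fact n"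
    by (simp add: erlang_CDF_def m)
  finally show ?thesis .
qed

lemma pois_block:
  assumes n: "1 \<le> n"
    and Qm: "{f\<in>space (PiM (Inr ` {1..n}) (\<lambda>_. borel)). Q f} \<in> sets (PiM (Inr ` {1..n}) (\<lambda>_. borel))"
  shows "prob {\<omega>\<in>space M. counting T 1 \<omega> = n \<and> Q (V (Inr ` {1..n}) \<omega>)}
       = exp (- l) * l^n / fact n * prob {\<omega>\<in>space M. Q (V (Inr ` {1..n}) \<omega>)}"
proof -
  let ?B = "Inr ` {1..n} :: (nat+nat) set"
  let ?A = "Inl ` {1..n+1} :: (nat+nat) set"
  let ?P = "\<lambda>f. (\<Sum>i=1..n. f (Inl i)) \<le> (1::real) \<and> \<not> (\<Sum>i=1..n+1. f (Inl i)) \<le> 1"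
  have QS: "{\<omega>\<in>space M. Q (V ?B \<omega>)} \<in> sets M" by (rule Vset_sets[OF _ Qm]) auto
  have PA: "?P (V ?A \<omega>) \<longleftrightarrow> arrival T n \<omega> \<le> 1 \<and> \<not> arrival T (n+1) \<omega> \<le> 1" for \<omega>
  proof -
    have e1: "(\<Sum>i=1..n. V ?A \<omega> (Inl i)) = arrival T n \<omega>"
      using sumVl[of 1 n "{1..n+1}" \<omega>] by (simp add: arrival_def)
    have e2: "(\<Sum>i=1..n+1. V ?A \<omega> (Inl i)) = arrival T (n+1) \<omega>"
      using sumVl[of 1 "n+1" "{1..n+1}" \<omega>] by (simp add: arrival_def)
    show ?thesis by (simp only: e1 e2)
  qed
  have s1: "{\<omega>\<in>space M. counting T 1 \<omega> = n \<and> Q (V ?B \<omega>)} = {\<omega>\<in>space M. counting T 1 \<omega> = n} \<inter> {\<omega>\<in>space M. Q (V ?B \<omega>)}"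
    by auto
  have s2: "{\<omega>\<in>space M. ?P (V ?A \<omega>) \<and> Q (V ?B \<omega>)} = {\<omega>\<in>space M. arrival T n \<omega> \<le> 1 \<and> \<not> arrival T (n+1) \<omega> \<le> 1} \<inter> {\<omega>\<in>space M. Q (V ?B \<omega>)}"
    unfolding PA by auto
  have "prob {\<omega>\<in>space M. counting T 1 \<omega> = n \<and> Q (V ?B \<omega>)} = prob {\<omega>\<in>space M. ?P (V ?A \<omega>) \<and> Q (V ?B \<omega>)}"
    unfolding s1 s2
  proof (rule finite_measure_eq_AE)
    show "AE \<omega> in M. (\<omega> \<in> {\<omega> \<in> space M. counting T 1 \<omega> = n} \<inter> {\<omega> \<in> space M. Q (V ?B \<omega>)}) =
          (\<omega> \<in> {\<omega> \<in> space M. arrival T n \<omega> \<le> 1 \<and> \<not> arrival T (n + 1) \<omega> \<le> 1} \<inter> {\<omega> \<in> space M. Q (V ?B \<omega>)})"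
      using AE_good
    proof eventually_elim
      case (elim \<omega>)
      have "counting T 1 \<omega> = n \<longleftrightarrow> arrival T n \<omega> \<le> 1 \<and> \<not> arrival T (n+1) \<omega> \<le> 1"
        using le_N_iff[OF elim, of n] le_N_iff[OF elim, of "n+1"] n by auto
      then show ?case by auto
    qed
  qed (use QS in auto)
  also have "\<dots> = prob {\<omega>\<in>space M. ?P (V ?A \<omega>)} * prob {\<omega>\<in>space M. Q (V ?B \<omega>)}"
    by (rule block) (use Qm in \<open>auto, measurable\<close>)
  also have "prob {\<omega>\<in>space M. ?P (V ?A \<omega>)} = exp (- l) * l^n / fact n"
    unfolding PA using prob_G[OF n] by simp
  finally show ?thesis .
qed

definition q :: "nat \<Rightarrow> real" where "q n = exp (- l) * l^n / fact n"

lemma q_nonneg: "0 \<le> q n" using l_pos by (simp add: q_def)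

lemma q_summable: "summable q"
proof -
  have "summable (\<lambda>n. exp (- l) * (inverse (fact n) * l^n))"
    by (intro summable_mult summable_exp)
  moreover have "(\<lambda>n. exp (- l) * (inverse (fact n) * l^n)) = q"
    by (simp add: fun_eq_iff q_def divide_inverse mult_ac)
  ultimately show ?thesis by simp
qed

lemma q_summable_mult:
  assumes "\<And>n. 0 \<le> h n" "\<And>n. h n \<le> 1"
  shows "summable (\<lambda>n. q n * h n)"
proof (rule summable_comparison_test'[OF q_summable])
  fix n :: nat
  have "norm (q n * h n) = q n * h n" using q_nonneg assms(1)[of n] by simp
  also have "\<dots> \<le> q n * 1" by (intro mult_left_mono assms(2) q_nonneg)
  finally show "norm (q n * h n) \<le> q n" by simp
qed

lemma psum0: "partial_sum X 0 \<omega> = 0" by (simp add: partial_sum_def)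

lemma NS: "prob {\<omega>\<in>space M. counting T 1 \<omega> = n \<and> partial_sum X n \<omega> > u} = q n * prob (Ss n)"
proof (cases "n = 0")
  case True then show ?thesis using u_pos by (simp add: Ss_def psum0)
next
  case False
  then have n: "1 \<le> n" by simp
  let ?B = "Inr ` {1..n} :: (nat+nat) set"
  let ?Q = "\<lambda>f. (\<Sum>i=1..n. f (Inr i)) > u"
  have QB: "?Q (V ?B \<omega>) \<longleftrightarrow> partial_sum X n \<omega> > u" for \<omega>
    using sumV[of 1 n "{1..n}" \<omega>] by (simp add: partial_sum_def)
  have "prob {\<omega>\<in>space M. counting T 1 \<omega> = n \<and> ?Q (V ?B \<omega>)} = q n * prob {\<omega>\<in>space M. ?Q (V ?B \<omega>)}"
    unfolding q_def by (rule pois_block[OF n]) measurable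
  then show ?thesis unfolding QB Ss_def .
qed

lemma NE: "prob {\<omega>\<in>space M. counting T 1 \<omega> = n \<and> (\<exists>k\<in>{1..n}. partial_sum X k \<omega> > u)} = q n * prob (Es n)"
proof (cases "n = 0")
  case True then show ?thesis by (simp add: Es_def)
next
  case False
  then have n: "1 \<le> n" by simp
  let ?B = "Inr ` {1..n} :: (nat+nat) set"
  let ?Q = "\<lambda>f. \<exists>k\<in>{1..n}. (\<Sum>i=1..k. f (Inr i)) > u"
  have QB: "?Q (V ?B \<omega>) \<longleftrightarrow> (\<exists>k\<in>{1..n}. partial_sum X k \<omega> > u)" for \<omega>
  proof -
    have eq: "(\<Sum>i=1..k. V ?B \<omega> (Inr i)) = partial_sum X k \<omega>" if "k \<le> n" for k
      using sumV[of 1 k "{1..n}" \<omega>] that by (simp add: partial_sum_def)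
    show ?thesis by (rule bex_cong[OF refl], subst eq, auto)
  qed
  have "prob {\<omega>\<in>space M. counting T 1 \<omega> = n \<and> ?Q (V ?B \<omega>)} = q n * prob {\<omega>\<in>space M. ?Q (V ?B \<omega>)}"
    unfolding q_def by (rule pois_block[OF n]) measurable
  then show ?thesis unfolding QB Es_def .
qed


lemma sums_S: "(\<lambda>n. q n * prob (Ss n)) sums prob {\<omega>\<in>space M. compound T X 1 \<omega> > u}"
proof -
  let ?C = "\<lambda>n. {\<omega>\<in>space M. counting T 1 \<omega> = n \<and> partial_sum X n \<omega> > u}"
  have "(\<lambda>n. prob (?C n)) sums prob (\<Union>n. ?C n)"
    by (rule finite_measure_UNION) (auto simp: disjoint_family_on_def)
  moreover have "(\<Union>n. ?C n) = {\<omega>\<in>space M. compound T X 1 \<omega> > u}"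
    by (auto simp: compound_def)
  ultimately show ?thesis by (simp add: NS)
qed


lemma NB_sets[measurable]: "{\<omega>\<in>space M. \<exists>k\<in>{1..counting T 1 \<omega>}. partial_sum X k \<omega> > u} \<in> sets M"
proof -
  have "{\<omega>\<in>space M. \<exists>k\<in>{1..counting T 1 \<omega>}. partial_sum X k \<omega> > u}
     = {\<omega>\<in>space M. \<exists>n. counting T 1 \<omega> = n \<and> (\<exists>k\<in>{1..n}. partial_sum X k \<omega> > u)}" by auto
  also have "\<dots> \<in> sets M" by measurable
  finally show ?thesis .
qed


lemma sums_E: "(\<lambda>n. q n * prob (Es n)) sums prob {\<omega>\<in>space M. \<exists>k\<in>{1..counting T 1 \<omega>}. partial_sum X k \<omega> > u}"
proof -
  let ?C = "\<lambda>n. {\<omega>\<in>space M. counting T 1 \<omega> = n \<and> (\<exists>k\<in>{1..n}. partial_sum X k \<omega> > u)}"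
  have "(\<lambda>n. prob (?C n)) sums prob (\<Union>n. ?C n)"
    by (rule finite_measure_UNION) (auto simp: disjoint_family_on_def)
  moreover have "(\<Union>n. ?C n) = {\<omega>\<in>space M. \<exists>k\<in>{1..counting T 1 \<omega>}. partial_sum X k \<omega> > u}"
    by auto
  moreover have e: "\<And>n. prob (?C n) = q n * prob (Es n)" by (rule NE)
  ultimately show ?thesis unfolding e by simp
qed


lemma LHS_le: "measure M {\<omega> \<in> space M. \<exists>t\<in>{0..1}. compound T X t \<omega> > u}
   \<le> prob {\<omega>\<in>space M. \<exists>k\<in>{1..counting T 1 \<omega>}. partial_sum X k \<omega> > u}"
proof (rule finite_measure_mono_AE)
  show "AE \<omega> in M. \<omega> \<in> {\<omega> \<in> space M. \<exists>t\<in>{0..1}. compound T X t \<omega> > u} \<longrightarrow>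
      \<omega> \<in> {\<omega>\<in>space M. \<exists>k\<in>{1..counting T 1 \<omega>}. partial_sum X k \<omega> > u}"
    using AE_good
  proof eventually_elim
    case (elim \<omega>)
    show ?case
    proof
      assume "\<omega> \<in> {\<omega> \<in> space M. \<exists>t\<in>{0..1}. compound T X t \<omega> > u}"
      then obtain t where t: "t \<in> {0..1}" "compound T X t \<omega> > u" and om: "\<omega> \<in> space M" by auto
      have sub: "{m. 1 \<le> m \<and> arrival T m \<omega> \<le> t} \<subseteq> {1..counting T 1 \<omega>}"
      proof
        fix m assume "m \<in> {m. 1 \<le> m \<and> arrival T m \<omega> \<le> t}"
        then have "m \<in> {m. 1 \<le> m \<and> arrival T m \<omega> \<le> 1}" using t(1) by auto
        then show "m \<in> {1..counting T 1 \<omega>}" using K_eq[OF elim] by blast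
      qed
      have le: "counting T t \<omega> \<le> counting T 1 \<omega>"
        unfolding counting_def[of T t] using card_mono[OF _ sub] by simp
      have ge: "1 \<le> counting T t \<omega>"
      proof (rule ccontr)
        assume "\<not> 1 \<le> counting T t \<omega>"
        then have "counting T t \<omega> = 0" by simp
        then show False using t(2) u_pos by (simp add: compound_def psum0)
      qed
      show "\<omega> \<in> {\<omega>\<in>space M. \<exists>k\<in>{1..counting T 1 \<omega>}. partial_sum X k \<omega> > u}"
      proof -
        have "counting T t \<omega> \<in> {1..counting T 1 \<omega>}" using le ge by simp
        then show ?thesis using om t(2) unfolding compound_def by blast
      qed
    qed
  qed
qed measurable

lemma main:
  "measure M {\<omega> \<in> space M. \<exists>t\<in>{0..1}. compound T X t \<omega> > u}
     \<le> 2 * measure M {\<omega> \<in> space M. compound T X 1 \<omega> > u}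
       - exp (- l) * (l * measure M {\<omega> \<in> space M. X 1 \<omega> > u}
           + (\<Sum>m. l ^ (m + 2) / fact (m + 2) *
               measure M {\<omega> \<in> space M. (\<forall>k\<in>{1..m + 1}. partial_sum X k \<omega> \<le> u)
                                        \<and> partial_sum X (m + 2) \<omega> > u}))"
proof -
  define a where "a n = prob (Es n)" for n
  define c where "c n = prob (Ss n)" for n
  define f where "f n = (if n = 0 then 0 else prob (Fs n))" for n
  define g where "g n = q n * f n" for n
  define H where "H m = l ^ (m + 2) / fact (m + 2) *
               measure M {\<omega> \<in> space M. (\<forall>k\<in>{1..m + 1}. partial_sum X k \<omega> \<le> u)
                                        \<and> partial_sum X (m + 2) \<omega> > u}" for m
  define PB where "PB = prob {\<omega>\<in>space M. \<exists>k\<in>{1..counting T 1 \<omega>}. partial_sum X k \<omega> > u}"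
  define PS where "PS = prob {\<omega>\<in>space M. compound T X 1 \<omega> > u}"
  have sa: "(\<lambda>n. q n * a n) sums PB" using sums_E by (simp add: a_def PB_def)
  have sc: "(\<lambda>n. q n * c n) sums PS" using sums_S by (simp add: c_def PS_def)
  have sg: "summable g" unfolding g_def by (rule q_summable_mult) (auto simp: f_def)
  have pt: "q n * a n \<le> 2 * (q n * c n) - g n" for n
  proof (cases "n = 0")
    case True
    show ?thesis using True by (simp add: a_def c_def g_def f_def Es_def Ss_def psum0 mult_nonneg_nonneg q_nonneg)
  next
    case False
    then have "a n \<le> 2 * c n - f n" using rw_ineq[of n] by (simp add: a_def c_def f_def)
    then have "q n * a n \<le> q n * (2 * c n - f n)" by (intro mult_left_mono q_nonneg)
    then show ?thesis by (simp add: g_def algebra_simps)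
  qed
  have "measure M {\<omega> \<in> space M. \<exists>t\<in>{0..1}. compound T X t \<omega> > u} \<le> PB"
    unfolding PB_def by (rule LHS_le)
  also have "PB = (\<Sum>n. q n * a n)" using sa by (rule sums_unique)
  also have "\<dots> \<le> (\<Sum>n. 2 * (q n * c n) - g n)"
    by (rule suminf_le[OF pt sums_summable[OF sa]]) (intro summable_diff summable_mult sums_summable[OF sc] sg)
  also have "\<dots> = 2 * PS - suminf g"
  proof -
    have "(\<Sum>n. 2 * (q n * c n) - g n) = (\<Sum>n. 2 * (q n * c n)) - suminf g"
      by (rule suminf_diff[symmetric]) (intro summable_mult sums_summable[OF sc] sg)+
    also have "(\<Sum>n. 2 * (q n * c n)) = 2 * PS"
      using suminf_mult[OF sums_summable[OF sc], of 2] sums_unique[OF sc] by simp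
    finally show ?thesis .
  qed
  also have "suminf g = exp (- l) * (l * measure M {\<omega> \<in> space M. X 1 \<omega> > u} + (\<Sum>m. H m))"
  proof -
    have g0: "g 0 = 0" by (simp add: g_def f_def)
    have s1: "summable (\<lambda>n. g (Suc n))" using sg by (simp add: summable_Suc_iff)
    have "(\<Sum>n. g (Suc n)) = suminf g" using suminf_split_head[OF sg] g0 by simp
    moreover have "(\<Sum>n. g (Suc (Suc n))) = (\<Sum>n. g (Suc n)) - g 1"
      using suminf_split_head[OF s1] by simp
    ultimately have e1: "suminf g = g 1 + (\<Sum>n. g (Suc (Suc n)))" by simp
    have s2: "summable (\<lambda>n. g (Suc (Suc n)))" using summable_Suc_iff[of "\<lambda>n. g (Suc n)"] s1 by simp
    have gSS: "g (Suc (Suc m)) = exp (- l) * H m" for m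
      by (simp add: g_def q_def f_def H_def Fs_def)
    have sH: "summable H"
    proof -
      have "summable (\<lambda>m. exp l * g (Suc (Suc m)))" using s2 by (rule summable_mult)
      moreover have "(\<lambda>m. exp l * g (Suc (Suc m))) = H"
        by (simp add: fun_eq_iff gSS exp_minus)
      ultimately show ?thesis by simp
    qed
    have "(\<Sum>n. g (Suc (Suc n))) = exp (- l) * (\<Sum>m. H m)"
      unfolding gSS by (rule suminf_mult[OF sH])
    moreover have "g 1 = exp (- l) * (l * measure M {\<omega> \<in> space M. X 1 \<omega> > u})"
      by (simp add: g_def q_def f_def Fs_def partial_sum_def)
    ultimately show ?thesis using e1 by (simp add: algebra_simps)
  qed
  finally show ?thesis unfolding PS_def H_def .
qed

end

theorem lemma11:
  fixes M :: "'a measure" and T X :: "nat \<Rightarrow> 'a \<Rightarrow> real" and l u :: real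
  assumes "prob_space M"
    and l_pos: "0 < l"
    and indep: "prob_space.indep_vars M (\<lambda>_. borel)
                  (\<lambda>i. case i of Inl n \<Rightarrow> T n | Inr n \<Rightarrow> X n) (Inl ` {1..} \<union> Inr ` {1..})"
    and exp_T: "\<And>n. 1 \<le> n \<Longrightarrow> distributed M lborel (T n) (\<lambda>x. ennreal (exponential_density l x))"
    and X_rv: "\<And>n. 1 \<le> n \<Longrightarrow> X n \<in> borel_measurable M"
    and X_ident: "\<And>n. 1 \<le> n \<Longrightarrow> distr M borel (X n) = distr M borel (X 1)"
    and X_symm: "distr M borel (\<lambda>\<omega>. - X 1 \<omega>) = distr M borel (X 1)"
    and "0 < u"
  shows "measure M {\<omega> \<in> space M. \<exists>t\<in>{0..1}. compound T X t \<omega> > u}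
     \<le> 2 * measure M {\<omega> \<in> space M. compound T X 1 \<omega> > u}
       - exp (- l) * (l * measure M {\<omega> \<in> space M. X 1 \<omega> > u}
           + (\<Sum>m. l ^ (m + 2) / fact (m + 2) *
               measure M {\<omega> \<in> space M. (\<forall>k\<in>{1..m + 1}. partial_sum X k \<omega> \<le> u)
                                        \<and> partial_sum X (m + 2) \<omega> > u}))"
proof -
  interpret cpp M T X l u
    by (intro cpp.intro cpp_axioms.intro assms(1)) (fact assms)+
  show ?thesis by (rule main)
qed

end
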